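(* Let $d\ge1$, $\mathcal{C}$ the middle-thirds Cantor set, $\mathcal{K}=\mathcal{C}^d$, $s=\dim_H\mathcal{K}$, and $\mu$ the restriction to $\mathcal{K}$ of the $s$-dimensional Hausdorff measure. Then $\alpha_1(\mu)\le\frac{\log2}{\log3}$.
   Context: $\alpha_1(\mu)=\liminf_{\varepsilon\to0}\frac{\log\sup_{\mathcal{L}}\mu(\mathcal{L}^{(\varepsilon)})}{\log\varepsilon}$, the supremum over affine hyperplanes $\mathcal{L}$ of $\mathbb{R}^d$ and $\mathcal{L}^{(\varepsilon)}$ the open Euclidean $\varepsilon$-neighborhood of $\mathcal{L}$. *)

theory Defs
  imports "HOL-Analysis.Analysis"
begin

fun cantor_stage :: "nat \<Rightarrow> real set" where
  "cantor_stage 0 = {0..1}"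
| "cantor_stage (Suc k) = (\<lambda>x. x / 3) ` cantor_stage k \<union> (\<lambda>x. 2/3 + x / 3) ` cantor_stage k"

definition cantor_set :: "real set" where
  "cantor_set = (\<Inter>k. cantor_stage k)"

text \<open>The product set C^d inside real^'n (d = CARD('n)).\<close>
definition cantor_power :: "(real ^ 'n) set" where
  "cantor_power = {x. \<forall>i. x $ i \<in> cantor_set}"

definition hd_term :: "real \<Rightarrow> 'a::metric_space set \<Rightarrow> ennreal" where
  "hd_term s U = (if U = {} then 0 else if s = 0 then 1 else ennreal (diameter U powr s))"

definition hausdorff_pre :: "real \<Rightarrow> real \<Rightarrow> 'a::metric_space set \<Rightarrow> ennreal" where
  "hausdorff_pre s \<delta> A =
     (INF U \<in> {U :: nat \<Rightarrow> 'a set. A \<subseteq> (\<Union>i. U i) \<and> (\<forall>i. diameter (U i) \<le> \<delta>)}.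
        \<Sum>i. hd_term s (U i))"

text \<open>s-dimensional Hausdorff (outer) measure (unnormalised).\<close>
definition hausdorff_measure :: "real \<Rightarrow> 'a::metric_space set \<Rightarrow> ennreal" where
  "hausdorff_measure s A = (SUP \<delta> \<in> {0<..}. hausdorff_pre s \<delta> A)"

definition hausdorff_dim :: "'a::metric_space set \<Rightarrow> real" where
  "hausdorff_dim A = Inf {t. t \<ge> 0 \<and> hausdorff_measure t A = 0}"

definition affine_hyperplanes :: "(real ^ 'n) set set" where
  "affine_hyperplanes = {{x. a \<bullet> x = b} | a b. a \<noteq> 0}"

definition open_nbhd :: "'a::metric_space set \<Rightarrow> real \<Rightarrow> 'a set" where
  "open_nbhd L \<epsilon> = {x. \<exists>y\<in>L. dist x y < \<epsilon>}"

definition alpha1 :: "((real ^ 'n) set \<Rightarrow> real) \<Rightarrow> ereal" where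
  "alpha1 \<mu> = Liminf (at_right 0)
      (\<lambda>\<epsilon>. ereal (ln (Sup ((\<lambda>L. \<mu> (open_nbhd L \<epsilon>)) ` affine_hyperplanes)) / ln \<epsilon>))"

end

theory Submission
  imports Defs
begin

fun Mset :: "nat \<Rightarrow> nat set" where
  "Mset 0 = {0}"
| "Mset (Suc k) = Mset k \<union> (\<lambda>m. 2*3^k + m) ` Mset k"

lemma Mset_finite: "finite (Mset k)"
  by (induction k) auto

lemma Mset_lt: "m \<in> Mset k \<Longrightarrow> m < 3^k"
proof (induction k arbitrary: m)
  case 0 then show ?case by simp
next
  case (Suc k)
  from Suc.prems consider "m \<in> Mset k" | a where "a \<in> Mset k" "m = 2*3^k + a" by auto
  then show ?case
  proof cases
    case 1 then have "m < 3^k" using Suc.IH by blast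
    then show ?thesis by simp
  next
    case 2 then have "a < 3^k" using Suc.IH by blast
    then show ?thesis using 2 by simp
  qed
qed

lemma Mset_card: "card (Mset k) = 2^k"
proof (induction k)
  case 0 then show ?case by simp
next
  case (Suc k)
  have disj: "Mset k \<inter> (\<lambda>m. 2*3^k + m) ` Mset k = {}"
    using Mset_lt by fastforce
  have "card (Mset (Suc k)) = card (Mset k) + card ((\<lambda>m. 2*3^k + m) ` Mset k)"
    using disj Mset_finite by (simp add: card_Un_disjoint)
  also have "card ((\<lambda>m. 2*3^k + m) ` Mset k) = card (Mset k)"
    by (rule card_image) (simp add: inj_on_def)
  finally show ?case using Suc by simp
qed

lemma Mset_mono: "j \<le> k \<Longrightarrow> Mset j \<subseteq> Mset k"
proof (induction k)
  case 0 then show ?case by simp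
next
  case (Suc k)
  then show ?case by (cases "j = Suc k") auto
qed

lemma Mset_times3: "m \<in> Mset k \<Longrightarrow> 3*m \<in> Mset (Suc k)"
proof (induction k arbitrary: m)
  case 0 then show ?case by simp
next
  case (Suc k)
  from Suc.prems have "m \<in> Mset k \<or> (\<exists>m0\<in>Mset k. m = 2*3^k + m0)" by auto
  then show ?case
  proof
    assume "m \<in> Mset k"
    then have "3*m \<in> Mset (Suc k)" using Suc.IH by blast
    then show ?thesis by simp
  next
    assume "\<exists>m0\<in>Mset k. m = 2*3^k + m0"
    then obtain m0 where m0: "m0 \<in> Mset k" "m = 2*3^k + m0" by blast
    have "3*m0 \<in> Mset (Suc k)" using Suc.IH m0(1) by blast
    moreover have "3*m = 2*3^(Suc k) + 3*m0" using m0(2) by simp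
    ultimately show ?thesis by (simp only: Mset.simps(2)) blast
  qed
qed

lemma Mset_times3_pow: "m \<in> Mset k \<Longrightarrow> m*3^j \<in> Mset (k+j)"
proof (induction j)
  case 0 then show ?case by simp
next
  case (Suc j)
  then have "3*(m*3^j) \<in> Mset (Suc (k+j))" using Mset_times3 by blast
  then show ?case by (simp add: mult.commute mult.left_commute)
qed

lemma Mset_sep: "m \<in> Mset k \<Longrightarrow> m' \<in> Mset k \<Longrightarrow> m < m' \<Longrightarrow> m + 2 \<le> m'"
proof (induction k arbitrary: m m')
  case 0 then show ?case by simp
next
  case (Suc k)
  show ?case
  proof (cases "m \<in> Mset k")
    case True
    show ?thesis
    proof (cases "m' \<in> Mset k")
      case True
      then show ?thesis using Suc \<open>m \<in> Mset k\<close> by blast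
    next
      case False
      then obtain b where "b \<in> Mset k" "m' = 2*3^k + b" using Suc.prems by auto
      moreover have "m < 3^k" using True Mset_lt by blast
      moreover have "(1::nat) \<le> 3^k" by simp
      ultimately show ?thesis by linarith
    qed
  next
    case False
    then obtain a where a: "a \<in> Mset k" "m = 2*3^k + a" using Suc.prems by auto
    show ?thesis
    proof (cases "m' \<in> Mset k")
      case True
      then have "m' < 3^k" using Mset_lt by blast
      then show ?thesis using a Suc.prems by linarith
    next
      case False
      then obtain b where "b \<in> Mset k" "m' = 2*3^k + b" using Suc.prems by auto
      then show ?thesis using a Suc.IH Suc.prems by force
    qed
  qed
qed

definition ival :: "nat \<Rightarrow> nat \<Rightarrow> real set" where
  "ival k m = {real m / 3^k .. (real m + 1) / 3^k}"

lemma image_div3_ival: "(\<lambda>x. x / 3) ` ival k m = ival (Suc k) m"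
proof -
  have "(\<lambda>x. x / 3) ` {a..b} = {a/3..b/3}" for a b :: real
    by simp
  then show ?thesis by (simp add: ival_def)
qed

lemma stage_eq: "cantor_stage k = (\<Union>m\<in>Mset k. ival k m)"
proof (induction k)
  case 0 then show ?case by (simp add: ival_def)
next
  case (Suc k)
  have A: "(\<lambda>x. x / 3) ` cantor_stage k = (\<Union>m\<in>Mset k. ival (Suc k) m)"
    unfolding Suc image_UN image_div3_ival by simp
  have B: "(\<lambda>x. 2/3 + x / 3) ` ival k m = ival (Suc k) (2*3^k + m)" for m
  proof -
    have "(\<lambda>x. 2/3 + x / 3) ` {a..b} = {2/3 + a/3..2/3+b/3}" for a b :: real
    proof (rule set_eqI, rule iffI)
      fix y assume "y \<in> (\<lambda>x. 2/3 + x / 3) ` {a..b}"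
      then show "y \<in> {2/3 + a/3..2/3+b/3}" by auto
    next
      fix y assume y: "y \<in> {2/3 + a/3..2/3+b/3}"
      show "y \<in> (\<lambda>x. 2/3 + x / 3) ` {a..b}"
        by (rule rev_image_eqI[of "3*(y - 2/3)"]) (use y in \<open>auto simp: field_simps\<close>)
    qed
    moreover have "2/3 + real m / 3^k / 3 = real (2*3^k + m) / 3^(Suc k)"
      by (simp add: field_simps)
    moreover have "2/3 + (real m + 1) / 3^k / 3 = (real (2*3^k + m) + 1) / 3^(Suc k)"
      by (simp add: field_simps)
    ultimately show ?thesis by (simp add: ival_def)
  qed
  have C: "(\<lambda>x. 2/3 + x / 3) ` cantor_stage k = (\<Union>m\<in>Mset k. ival (Suc k) (2*3^k + m))"
    unfolding Suc image_UN B by simp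
  show ?case unfolding cantor_stage.simps A C by auto
qed

lemma stage_antimono1: "cantor_stage (Suc k) \<subseteq> cantor_stage k"
proof (induction k)
  case 0 then show ?case by auto
next
  case (Suc k)
  show ?case
    using image_mono[OF Suc, of "\<lambda>x. x / 3"] image_mono[OF Suc, of "\<lambda>x. 2/3 + x / 3"]
    by (simp only: cantor_stage.simps) blast
qed

lemma stage_antimono: "j \<le> k \<Longrightarrow> cantor_stage k \<subseteq> cantor_stage j"
proof (induction k)
  case 0 then show ?case by simp
next
  case (Suc k)
  then show ?case using stage_antimono1[of k] by (cases "j = Suc k") auto
qed

lemma endpoint_in_stage: "m \<in> Mset k \<Longrightarrow> real m / 3^k \<in> cantor_stage k"
  unfolding stage_eq ival_def by (auto intro!: bexI[of _ m] divide_right_mono)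

lemma endpoint_in_cantor: "m \<in> Mset k \<Longrightarrow> real m / 3^k \<in> cantor_set"
  unfolding cantor_set_def
proof
  fix j assume m: "m \<in> Mset k"
  show "real m / 3^k \<in> cantor_stage j"
  proof (cases "j \<le> k")
    case True
    then show ?thesis using endpoint_in_stage[OF m] stage_antimono by blast
  next
    case False
    then obtain i where j: "j = k + i" by (metis le_add_diff_inverse nle_le)
    have "m * 3^i \<in> Mset j" using Mset_times3_pow[OF m] j by simp
    then have "real (m * 3^i) / 3^j \<in> cantor_stage j" by (rule endpoint_in_stage)
    moreover have "real (m * 3^i) / 3^j = real m / 3^k" by (simp add: j power_add)
    ultimately show ?thesis by simp
  qed
qed

lemma cantor_01: "cantor_set \<subseteq> {0..1}"
  unfolding cantor_set_def using INT_lower[of 0 UNIV cantor_stage] by simp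

lemma cantor_in_stage: "x \<in> cantor_set \<Longrightarrow> \<exists>m\<in>Mset k. x \<in> ival k m"
  unfolding cantor_set_def using stage_eq by blast

lemma compact_stage: "compact (cantor_stage k)"
proof (induction k)
  case 0 then show ?case by simp
next
  case (Suc k)
  have "compact ((\<lambda>x. x / 3) ` cantor_stage k)"
    by (rule compact_continuous_image[OF _ Suc]) (intro continuous_intros, auto)
  moreover have "compact ((\<lambda>x. 2/3 + x / 3) ` cantor_stage k)"
    by (rule compact_continuous_image[OF _ Suc]) (intro continuous_intros, auto)
  ultimately show ?case by (simp add: compact_Un)
qed

lemma closed_cantor: "closed cantor_set"
  unfolding cantor_set_def using compact_stage by (simp add: closed_INT compact_imp_closed)

lemma ival_sep:
  assumes "m \<in> Mset k" "m' \<in> Mset k" "m \<noteq> m'" "x \<in> ival k m" "y \<in> ival k m'"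
  shows "1 / 3^k \<le> \<bar>x - y\<bar>"
proof -
  have p: "(0::real) < 3^k" by simp
  { fix a b :: nat and u v :: real
    assume ab: "a + 2 \<le> b" and u: "u \<in> ival k a" and v: "v \<in> ival k b"
    have "real a + 2 \<le> real b" using ab by linarith
    then have "(real a + 2)/3^k \<le> real b / 3^k"
      using p by (intro divide_right_mono) auto
    moreover have "(real a + 1)/3^k + 1/3^k = (real a + 2)/3^k"
      by (simp add: add_divide_distrib)
    ultimately have "(real a + 1)/3^k + 1/3^k \<le> real b / 3^k" by simp
    then have "1/3^k \<le> v - u" using u v unfolding ival_def by auto
  } note * = this
  show ?thesis
  proof (cases "m < m'")
    case True
    then show ?thesis using *[OF Mset_sep[OF assms(1,2) True] assms(4,5)] by linarith
  next
    case False
    then have "m' < m" using assms(3) by linarith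
    then show ?thesis using *[OF Mset_sep[OF assms(2,1)] assms(5,4)] by linarith
  qed
qed

lemma same_ival:
  assumes "x \<in> cantor_set" "y \<in> cantor_set" "\<bar>x - y\<bar> < 1/3^k"
  shows "\<exists>m\<in>Mset k. x \<in> ival k m \<and> y \<in> ival k m"
  using cantor_in_stage[OF assms(1), of k] cantor_in_stage[OF assms(2), of k] ival_sep assms(3)
  by (metis not_le)

lemma count_window:
  assumes "S \<subseteq> Mset N" "\<forall>a\<in>S. \<forall>b\<in>S. \<bar>real a - real b\<bar> < 3^j"
  shows "card S \<le> 2^j"
  using assms
proof (induction N arbitrary: S)
  case 0
  then have "card S \<le> card (Mset 0)" using Mset_finite by (intro card_mono) auto
  also have "\<dots> \<le> 2^j" by simp
  finally show ?case .
next
  case (Suc N)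
  show ?case
  proof (cases "Suc N \<le> j")
    case True
    have "card S \<le> card (Mset (Suc N))" using Suc.prems Mset_finite by (intro card_mono) auto
    also have "\<dots> = 2^Suc N" by (rule Mset_card)
    also have "\<dots> \<le> 2^j" using True by (intro power_increasing) auto
    finally show ?thesis .
  next
    case False
    then have jN: "j \<le> N" by simp
    have pj: "(3::real)^j \<le> 3^N" using jN by (intro power_increasing) auto
    show ?thesis
    proof (cases "S \<subseteq> Mset N")
      case True
      then show ?thesis using Suc.IH Suc.prems(2) by blast
    next
      case False
      then obtain b where b: "b \<in> S" "b \<notin> Mset N" by blast
      then obtain b0 where b0: "b0 \<in> Mset N" "b = 2*3^N + b0" using Suc.prems(1) by auto
      have noA: "a \<notin> Mset N" if "a \<in> S" for a
      proof
        assume a: "a \<in> Mset N"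
        have "a < 3^N" using Mset_lt[OF a] .
        then have "real a + 1 \<le> 3^N" by (metis of_nat_less_iff of_nat_numeral of_nat_power Suc_le_eq of_nat_Suc of_nat_le_iff add.commute)
        moreover have "real b \<ge> 2*3^N" using b0 by simp
        moreover have "\<bar>real a - real b\<bar> < 3^j" using Suc.prems(2) that b(1) by blast
        ultimately show False using pj by linarith
      qed
      define S' where "S' = (\<lambda>m. m - 2*3^N) ` S"
      have shift: "\<forall>a\<in>S. \<exists>a0\<in>Mset N. a = 2*3^N + a0"
        using Suc.prems(1) noA by auto
      have "inj_on (\<lambda>m. m - 2*3^N) S"
      proof (rule inj_onI)
        fix a b assume "a \<in> S" "b \<in> S" "a - 2*3^N = b - 2*3^N"
        then show "a = b" using shift by (metis add_diff_cancel_left')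
      qed
      then have cS: "card S' = card S" unfolding S'_def by (rule card_image)
      have "S' \<subseteq> Mset N" using shift unfolding S'_def by force
      moreover have "\<forall>a\<in>S'. \<forall>b\<in>S'. \<bar>real a - real b\<bar> < 3^j"
      proof (intro ballI)
        fix a' b' assume "a' \<in> S'" "b' \<in> S'"
        then obtain a b where "a \<in> S" "b \<in> S" "a' = a - 2*3^N" "b' = b - 2*3^N"
          unfolding S'_def by blast
        moreover have "a \<ge> 2*3^N" "b \<ge> 2*3^N" using shift \<open>a \<in> S\<close> \<open>b \<in> S\<close> by force+
        ultimately have "real a' - real b' = real a - real b" by (simp add: of_nat_diff)
        then show "\<bar>real a' - real b'\<bar> < 3^j" using Suc.prems(2) \<open>a \<in> S\<close> \<open>b \<in> S\<close> by simp
      qed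
      ultimately have "card S' \<le> 2^j" using Suc.IH by blast
      then show ?thesis using cS by simp
    qed
  qed
qed

definition W :: "nat \<Rightarrow> ('n::finite \<Rightarrow> nat) set" where
  "W N = {w. \<forall>i. w i \<in> Mset N}"

definition corner :: "nat \<Rightarrow> ('n::finite \<Rightarrow> nat) \<Rightarrow> real^'n" where
  "corner N w = (\<chi> i. real (w i) / 3^N)"

definition Pk :: "nat \<Rightarrow> 'n::finite \<Rightarrow> (real^'n) set" where
  "Pk k i0 = {x \<in> cantor_power. x $ i0 \<le> 1/3^k}"

lemma W_PiE: "W N = PiE UNIV (\<lambda>_. Mset N)"
  by (simp add: W_def PiE_UNIV_domain Pi_def)

lemma finite_W: "finite (W N)"
  unfolding W_PiE by (intro finite_PiE) (auto simp: Mset_finite)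

lemma card_W: "card (W N :: ('n::finite \<Rightarrow> nat) set) = (2^N)^CARD('n)"
  unfolding W_PiE by (simp add: card_PiE Mset_card)

lemma corner_in_K: "w \<in> W N \<Longrightarrow> corner N w \<in> cantor_power"
  by (simp add: W_def corner_def cantor_power_def endpoint_in_cantor)

lemma PiE_card_le:
  assumes "\<And>i. card (S i) \<le> c" "\<And>i. finite (S i)"
  shows "card (PiE (UNIV::'n::finite set) S) \<le> c ^ CARD('n)"
proof -
  have "card (PiE (UNIV::'n set) S) = (\<Prod>i\<in>UNIV. card (S i))" by (simp add: card_PiE)
  also have "\<dots> \<le> (\<Prod>i\<in>(UNIV::'n set). c)" by (intro prod_mono) (use assms in auto)
  also have "\<dots> = c ^ CARD('n)" by simp
  finally show ?thesis .
qed

lemma count_small: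
  fixes V :: "(real^'n::finite) set"
  assumes V: "\<forall>x\<in>V. \<forall>y\<in>V. dist x y < 1/3^k" and kN: "k \<le> N"
  shows "card {w\<in>W N. corner N w \<in> V} \<le> (2^(N-k))^CARD('n)"
proof -
  define T where "T = {w\<in>W N. corner N w \<in> V}"
  define S where "S i = (\<lambda>w. w i) ` T" for i
  have SM: "S i \<subseteq> Mset N" for i unfolding S_def T_def W_def by auto
  have fin: "finite (S i)" for i using SM Mset_finite finite_subset by blast
  have cS: "card (S i) \<le> 2^(N-k)" for i
  proof (rule count_window[OF SM])
    show "\<forall>a\<in>S i. \<forall>b\<in>S i. \<bar>real a - real b\<bar> < 3^(N-k)"
    proof (intro ballI)
      fix a b assume "a \<in> S i" "b \<in> S i"
      then obtain u v where uv: "u \<in> T" "v \<in> T" "a = u i" "b = v i" unfolding S_def by blast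
      have "\<bar>corner N u $ i - corner N v $ i\<bar> \<le> dist (corner N u) (corner N v)"
        using component_le_norm_cart[of "corner N u - corner N v" i] by (simp add: dist_norm)
      also have "\<dots> < 1/3^k" using V uv unfolding T_def by blast
      finally have "\<bar>real a - real b\<bar> / 3^N < 1/3^k"
        using uv by (simp add: corner_def diff_divide_distrib[symmetric])
      then have "\<bar>real a - real b\<bar> < 3^N / 3^k" by (simp add: field_simps)
      also have "(3::real)^N / 3^k = 3^(N-k)" using kN by (simp add: power_diff)
      finally show "\<bar>real a - real b\<bar> < 3^(N-k)" .
    qed
  qed
  have "T \<subseteq> PiE UNIV S" unfolding S_def by (auto simp: PiE_UNIV_domain)
  then have "card T \<le> card (PiE (UNIV::'n set) S)"
    by (intro card_mono) (auto intro: finite_PiE fin)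
  also have "\<dots> \<le> (2^(N-k))^CARD('n)" by (rule PiE_card_le[OF cS fin])
  finally show ?thesis unfolding T_def .
qed

lemma count_strip:
  fixes i0 :: "'n::finite"
  assumes kN: "k \<le> N"
  shows "(2^N)^CARD('n) / 2^k \<le> real (card {w\<in>W N. corner N w \<in> Pk k i0})"
proof -
  define A where "A i = (if i = i0 then Mset (N-k) else Mset N)" for i
  have sub: "PiE UNIV A \<subseteq> {w\<in>W N. corner N w \<in> Pk k i0}"
  proof
    fix w assume w: "w \<in> PiE UNIV A"
    have wA: "w i \<in> A i" for i using w by (simp add: PiE_UNIV_domain Pi_iff)
    have "w i \<in> Mset N" for i using wA[of i] Mset_mono[of "N-k" N] by (auto simp: A_def split: if_splits)
    then have wW: "w \<in> W N" by (simp add: W_def)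
    have "w i0 \<in> Mset (N-k)" using wA[of i0] by (simp add: A_def)
    then have "w i0 < 3^(N-k)" by (rule Mset_lt)
    then have "real (w i0) \<le> 3^(N-k)" proof -
      have "w i0 \<le> 3^(N-k)" using \<open>w i0 < 3^(N-k)\<close> by simp
      then have "real (w i0) \<le> real (3^(N-k))" by (simp only: of_nat_le_iff)
      then show ?thesis by simp
    qed
    then have "real (w i0) / 3^N \<le> 3^(N-k) / 3^N" by (intro divide_right_mono) auto
    also have "(3::real)^(N-k) / 3^N = 1/3^k" using kN by (simp add: power_diff field_simps)
    finally show "w \<in> {w\<in>W N. corner N w \<in> Pk k i0}"
      using wW corner_in_K[OF wW] by (simp add: Pk_def corner_def)
  qed
  have finA: "finite (A i)" for i by (simp add: A_def Mset_finite)
  have "card (PiE UNIV A) = (\<Prod>i\<in>UNIV. card (A i))" by (simp add: card_PiE)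
  also have "\<dots> = card (A i0) * (\<Prod>i\<in>UNIV-{i0}. card (A i))"
    by (simp add: prod.remove)
  also have "(\<Prod>i\<in>UNIV-{i0}. card (A i)) = (\<Prod>i\<in>UNIV-{i0}. 2^N)"
    by (intro prod.cong) (auto simp: A_def Mset_card)
  also have "\<dots> = (2^N)^(CARD('n) - 1)" by (simp add: card_Diff_singleton)
  finally have c0: "card (PiE UNIV A) = card (A i0) * (2^N)^(CARD('n) - 1)" .
  have "card (A i0) = 2^(N-k)" by (simp add: A_def Mset_card)
  with c0 have c: "card (PiE UNIV A) = 2^(N-k) * (2^N)^(CARD('n) - 1)" by simp
  have "(2::real)^(N-k) = 2^N / 2^k" using kN by (simp add: power_diff)
  moreover have "(2^N::real) * (2^N)^(CARD('n) - 1) = (2^N)^CARD('n)"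
  proof -
    have "CARD('n) = Suc (CARD('n) - 1)" using zero_less_card_finite[where 'a='n] by linarith
    then have "((2::real)^N)^CARD('n) = (2^N)^Suc (CARD('n) - 1)" by (rule arg_cong)
    then show ?thesis by (simp only: power_Suc)
  qed
  ultimately have "real (card (PiE UNIV A)) = (2^N)^CARD('n) / 2^k"
    unfolding c by (simp del: power_Suc add: field_simps) (metis mult.assoc mult.commute)
  moreover have "card (PiE UNIV A) \<le> card {w\<in>W N. corner N w \<in> Pk k i0}"
    by (intro card_mono sub) (rule finite_subset[OF _ finite_W[of N]], auto)
  ultimately show ?thesis by simp
qed

lemma compact_K: "compact (cantor_power :: (real^'n::finite) set)"
proof -
  have eq: "(cantor_power :: (real^'n) set) = (\<Inter>i. (\<lambda>x. x $ i) -` cantor_set)"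
    by (auto simp: cantor_power_def)
  have "closed ((\<lambda>x::real^'n. x $ i) -` cantor_set)" for i
    by (intro continuous_closed_vimage closed_cantor) (auto intro: continuous_intros)
  then have cl: "closed (cantor_power :: (real^'n) set)" unfolding eq by auto
  have "(cantor_power :: (real^'n) set) \<subseteq> cbox 0 1"
    using cantor_01 by (auto simp: cantor_power_def mem_box_cart subset_iff)
  then have "bounded (cantor_power :: (real^'n) set)" using bounded_cbox bounded_subset by blast
  then show ?thesis using cl by (simp add: compact_eq_bounded_closed)
qed

lemma compact_Pk: fixes i0 :: "'n::finite" shows "compact (Pk k i0)"
proof -
  have "Pk k i0 = cantor_power \<inter> (\<lambda>x. x $ i0) -` {..1/3^k}" by (auto simp: Pk_def)
  moreover have "closed ((\<lambda>x::real^'n. x $ i0) -` {..1/3^k})"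
    by (intro continuous_closed_vimage) (auto intro: continuous_intros)
  ultimately show ?thesis using compact_K[where 'n='n] compact_Int_closed by simp
qed

lemma Pk0: "Pk 0 i0 = cantor_power"
  using cantor_01 by (auto simp: Pk_def cantor_power_def)

definition sdim :: "nat \<Rightarrow> real" where "sdim d = real d * ln 2 / ln 3"

lemma sdim_nonneg: "0 \<le> sdim d" by (simp add: sdim_def)

lemma pow3_sdim: "(1/3^k) powr sdim d = 1/(2^d)^k"
proof -
  have "(1/3^k::real) powr sdim d = exp (sdim d * ln (1/3^k))" by (simp add: powr_def)
  also have "ln (1/3^k::real) = - (real k * ln 3)" by (simp add: ln_div ln_realpow)
  also have "sdim d * (- (real k * ln 3)) = - (real k * real d * ln 2)"
    by (simp add: sdim_def)
  also have "exp (- (real k * real d * ln 2)) = 1/(2^d)^k"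
  proof -
    have "ln (1/(2^d)^k::real) = - (real k * real d * ln 2)"
      by (simp add: ln_div ln_realpow)
    then have "exp (- (real k * real d * ln 2)) = exp (ln (1/(2^d)^k::real))" by simp
    also have "\<dots> = 1/(2^d)^k" by simp
    finally show ?thesis .
  qed
  finally show ?thesis .
qed

lemma choose_level:
  assumes "0 \<le> r" "r < 1" "0 < e" "1 \<le> d"
  shows "\<exists>k. r < 1/3^k \<and> 1/(2^d)^k \<le> 2^d * (r powr sdim d + e)"
proof (cases "r = 0")
  case True
  obtain k where k: "(1/2::real)^k < e" using real_arch_pow_inv[OF assms(3)] by force
  have "(2::real)^k \<le> (2^d)^k"
    using assms(4) by (intro power_mono) (auto simp: self_le_power)
  then have "1/(2^d)^k \<le> (1/2::real)^k"
    by (simp add: power_one_over divide_simps)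
  also have "\<dots> \<le> e" using k by simp
  also have "e \<le> 2^d * (r powr sdim d + e)"
    using True assms(3) by (simp add: mult_le_cancel_right1)
  finally show ?thesis using True by (intro exI[of _ k]) simp
next
  case False
  then have r0: "0 < r" using assms(1) by simp
  obtain n where n: "(1/3::real)^n < r" using real_arch_pow_inv[OF r0, of "1/3"] by force
  have ex: "(1/3::real)^(Suc n) \<le> r"
  proof -
    have "(1/3::real)^(Suc n) \<le> (1/3)^n" by (intro power_decreasing) auto
    then show ?thesis using n by linarith
  qed
  define k where "k = (LEAST k. (1/3::real)^(Suc k) \<le> r)"
  have k1: "(1/3::real)^(Suc k) \<le> r" unfolding k_def by (rule LeastI[of _ n], rule ex)
  have k2: "r < 1/3^k"
  proof (cases k)
    case 0 then show ?thesis using assms(2) by simp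
  next
    case (Suc k')
    then have "\<not> (1/3::real)^(Suc k') \<le> r" unfolding k_def
      using not_less_Least[of k'] Suc k_def by (metis lessI)
    then show ?thesis using Suc by (simp add: power_one_over)
  qed
  have "1/(2^d)^(Suc k) = (1/3^(Suc k)) powr sdim d" by (simp only: pow3_sdim)
  also have "\<dots> \<le> r powr sdim d"
    using k1 by (intro powr_mono2) (auto simp: sdim_nonneg power_one_over)
  finally have "1/(2^d)^(Suc k) \<le> r powr sdim d" .
  then have "2^d * (1/(2^d)^(Suc k)) \<le> 2^d * (r powr sdim d)" by (rule mult_left_mono) simp
  moreover have "2^d * (1/(2^d)^(Suc k)) = (1/(2^d)^k :: real)" by simp
  moreover have "(0::real) \<le> 2^d * e" using assms(3) by simp
  ultimately have "1/(2^d)^k \<le> 2^d * (r powr sdim d + e)"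
    by (simp only: distrib_left)
  then show ?thesis using k2 by blast
qed

lemma open_nbhd_UN: "open_nbhd L e = (\<Union>y\<in>L. ball y e)"
  by (auto simp: open_nbhd_def dist_commute)

lemma open_open_nbhd: "open (open_nbhd L e)"
  unfolding open_nbhd_UN by auto

lemma geo_sum_le: "finite F \<Longrightarrow> (\<Sum>i\<in>F. (1/2::real)^(Suc i)) \<le> 1"
proof -
  assume F: "finite F"
  obtain n where "F \<subseteq> {..<n}" using F by (meson finite_nat_iff_bounded)
  then have "(\<Sum>i\<in>F. (1/2::real)^(Suc i)) \<le> (\<Sum>i<n. (1/2)^(Suc i))"
    by (intro sum_mono2) auto
  also have "(\<Sum>i<n. (1/2::real)^(Suc i)) = 1 - (1/2)^n"
    by (induction n) (auto simp: field_simps)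
  also have "\<dots> \<le> 1" by simp
  finally show ?thesis .
qed

lemma LB_core:
  fixes U :: "nat \<Rightarrow> (real^'n::finite) set" and i0 :: 'n
  assumes cov: "Pk k i0 \<subseteq> (\<Union>i. U i)" and diam: "\<And>i. diameter (U i) \<le> \<delta>" and \<delta>1: "\<delta> < 1"
    and bdd: "\<And>i. U i \<noteq> {} \<Longrightarrow> bounded (U i)"
  shows "ennreal (1/(2^CARD('n) * 2^k))
           \<le> (\<Sum>i. ennreal (if U i = {} then 0 else diameter (U i) powr sdim CARD('n)))"
proof -
  define d where "d = CARD('n)"
  define s where "s = sdim d"
  define g where "g i = (if U i = {} then 0 else diameter (U i) powr s)" for i
  have d1: "1 \<le> d" unfolding d_def by (simp add: Suc_le_eq)
  have g0: "0 \<le> g i" for i by (simp add: g_def)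
  define I where "I = {i. U i \<noteq> {}}"
  define r where "r i = diameter (U i)" for i
  have r0: "i \<in> I \<Longrightarrow> 0 \<le> r i" for i using bdd diameter_ge_0 by (auto simp: I_def r_def)
  have r1: "r i < 1" for i using diam \<delta>1 by (simp add: r_def) (meson le_less_trans)
  have gI: "i \<in> I \<Longrightarrow> g i = r i powr s" for i by (simp add: g_def I_def r_def)
  show ?thesis unfolding d_def[symmetric] s_def[symmetric] g_def[symmetric]
  proof (rule ennreal_le_epsilon)
    fix e :: real assume e: "0 < e"
    define ee where "ee i = e * (1/2)^(Suc i)" for i
    have ee0: "0 < ee i" for i using e by (simp add: ee_def)
    have "\<forall>i\<in>I. \<exists>k. r i < 1/3^k \<and> 1/(2^d)^k \<le> 2^d * (r i powr sdim d + ee i)"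
      using choose_level[OF r0 r1 ee0 d1] by blast
    then obtain kk where kk: "\<And>i. i \<in> I \<Longrightarrow> r i < 1/3^(kk i) \<and> 1/(2^d)^(kk i) \<le> 2^d * (g i + ee i)"
      using gI s_def by metis
    define \<eta> where "\<eta> i = (1/3^(kk i) - r i)/2" for i
    define V where "V i = open_nbhd (U i) (\<eta> i)" for i
    have \<eta>0: "i \<in> I \<Longrightarrow> 0 < \<eta> i" for i using kk by (simp add: \<eta>_def)
    have Vopen: "open (V i)" for i by (simp add: V_def open_open_nbhd)
    have UV: "i \<in> I \<Longrightarrow> U i \<subseteq> V i" for i
      using \<eta>0 by (force simp: V_def open_nbhd_def)
    have Vsmall: "\<forall>x\<in>V i. \<forall>y\<in>V i. dist x y < 1/3^(kk i)" if iI: "i \<in> I" for i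
    proof (intro ballI)
      fix x y assume "x \<in> V i" "y \<in> V i"
      then obtain a b where ab: "a \<in> U i" "b \<in> U i" "dist x a < \<eta> i" "dist y b < \<eta> i"
        by (auto simp: V_def open_nbhd_def)
      have "dist a b \<le> r i" unfolding r_def
        by (rule diameter_bounded_bound[OF bdd ab(1,2)]) (use ab in auto)
      have "dist x y \<le> dist x a + dist a b + dist b y"
        by (metis dist_triangle add.commute add_left_mono order_trans dist_commute)
      also have "\<dots> < \<eta> i + r i + \<eta> i"
        using ab \<open>dist a b \<le> r i\<close> by (simp add: dist_commute)
      also have "\<dots> = 1/3^(kk i)" by (simp add: \<eta>_def field_simps)
      finally show "dist x y < 1/3^(kk i)" .
    qed
    have covV: "Pk k i0 \<subseteq> \<Union>(V ` I)"
    proof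
      fix x assume "x \<in> Pk k i0"
      then obtain i where "x \<in> U i" using cov by blast
      then have "i \<in> I" "x \<in> V i" using UV by (auto simp: I_def)
      then show "x \<in> \<Union>(V ` I)" by blast
    qed
    obtain F where F: "F \<subseteq> I" "finite F" "Pk k i0 \<subseteq> \<Union>(V ` F)"
      using compactE_image[OF compact_Pk Vopen covV] by metis
    define N where "N = Max (insert k (kk ` F))"
    have kN: "k \<le> N" unfolding N_def using F(2) by simp
    have kkN: "i \<in> F \<Longrightarrow> kk i \<le> N" for i unfolding N_def using F(2) by simp
    define T where "T i = {w\<in>W N. corner N w \<in> V i}" for i
    have "{w\<in>W N. corner N w \<in> Pk k i0} \<subseteq> (\<Union>i\<in>F. T i)"
      using F(3) by (auto simp: T_def)
    then have "card {w\<in>W N. corner N w \<in> Pk k i0} \<le> card (\<Union>i\<in>F. T i)"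
      by (intro card_mono) (auto intro!: finite_UN_I F(2) finite_subset[OF _ finite_W[of N]] simp: T_def)
    also have "\<dots> \<le> (\<Sum>i\<in>F. card (T i))" by (rule card_UN_le[OF F(2)])
    also have "\<dots> \<le> (\<Sum>i\<in>F. (2^(N - kk i))^d)"
      using count_small[OF Vsmall kkN] F(1) unfolding T_def d_def by (intro sum_mono) blast
    finally have "card {w\<in>W N. corner N w \<in> Pk k i0} \<le> (\<Sum>i\<in>F. (2^(N - kk i))^d)" .
    then have "real (card {w\<in>W N. corner N w \<in> Pk k i0}) \<le> real (\<Sum>i\<in>F. (2^(N - kk i))^d)"
      by (simp only: of_nat_le_iff)
    also have "real (\<Sum>i\<in>F. (2^(N - kk i))^d) = (\<Sum>i\<in>F. ((2::real)^(N - kk i))^d)" by simp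
    finally have cnt: "real (card {w\<in>W N. corner N w \<in> Pk k i0}) \<le> (\<Sum>i\<in>F. ((2::real)^(N - kk i))^d)" .
    have "(2^N)^d / 2^k \<le> real (card {w\<in>W N. corner N w \<in> Pk k i0})"
      using count_strip[OF kN, of i0] unfolding d_def .
    also note cnt
    also have "(\<Sum>i\<in>F. ((2::real)^(N - kk i))^d) = (\<Sum>i\<in>F. (2^N)^d * (1/(2^d)^(kk i)) :: real)"
    proof (intro sum.cong refl)
      fix i assume "i \<in> F"
      then have "(2::real)^(N - kk i) = 2^N / 2^(kk i)" using kkN by (simp add: power_diff)
      then have "((2::real)^(N - kk i))^d = (2^N)^d / (2^(kk i))^d" by (simp add: power_divide)
      also have "((2::real)^(kk i))^d = (2^d)^(kk i)" by (simp add: power_mult[symmetric] mult.commute)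
      finally show "((2::real)^(N - kk i))^d = (2^N)^d * (1/(2^d)^(kk i))" by simp
    qed
    also have "\<dots> = (2^N)^d * (\<Sum>i\<in>F. 1/(2^d)^(kk i))" by (simp add: sum_distrib_left)
    finally have "(2^N)^d / 2^k \<le> (2^N)^d * (\<Sum>i\<in>F. 1/(2^d)^(kk i) :: real)" .
    then have A: "1/2^k \<le> (\<Sum>i\<in>F. 1/(2^d)^(kk i) :: real)"
      by (simp add: divide_simps mult.commute)
    also have "\<dots> \<le> (\<Sum>i\<in>F. 2^d * (g i + ee i))"
      using kk F(1) by (intro sum_mono) blast
    also have "\<dots> = 2^d * ((\<Sum>i\<in>F. g i) + (\<Sum>i\<in>F. ee i))"
      by (simp add: sum_distrib_left sum.distrib distrib_left)
    also have "(\<Sum>i\<in>F. ee i) \<le> e"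
    proof -
      have "(\<Sum>i\<in>F. ee i) = e * (\<Sum>i\<in>F. (1/2)^(Suc i))" by (simp add: ee_def sum_distrib_left)
      also have "\<dots> \<le> e * 1" using geo_sum_le[OF F(2)] e by (intro mult_left_mono) auto
      finally show ?thesis by simp
    qed
    then have "(2::real)^d * ((\<Sum>i\<in>F. g i) + (\<Sum>i\<in>F. ee i)) \<le> 2^d * ((\<Sum>i\<in>F. g i) + e)"
      by (intro mult_left_mono) auto
    finally have B: "1/(2^d * 2^k) \<le> (\<Sum>i\<in>F. g i) + e"
      by (simp add: divide_simps ac_simps)
    have "ennreal (1/(2^d * 2^k)) \<le> ennreal ((\<Sum>i\<in>F. g i) + e)"
      using B by (rule ennreal_leI)
    also have "\<dots> = (\<Sum>i\<in>F. ennreal (g i)) + ennreal e"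
      using g0 e by (simp add: ennreal_plus sum_nonneg sum_ennreal)
    also have "(\<Sum>i\<in>F. ennreal (g i)) \<le> (\<Sum>i. ennreal (g i))"
      by (intro sum_le_suminf) (auto simp: F(2))
    finally show "ennreal (1/(2^d * 2^k)) \<le> (\<Sum>i. ennreal (g i)) + ennreal e"
      by (simp add: add_right_mono)
  qed
qed

definition junk :: real where "junk = Sup (UNIV :: real set)"

lemma diam_unbounded:
  fixes S :: "'a::metric_space set"
  assumes "S \<noteq> {}" "\<not> bounded S"
  shows "diameter S = junk"
proof -
  define X where "X = (\<lambda>(x,y). dist x y) ` (S \<times> S)"
  have nb: "\<not> bdd_above X"
  proof
    assume "bdd_above X"
    then obtain B where B: "\<And>z. z \<in> X \<Longrightarrow> z \<le> B" by (auto simp: bdd_above_def)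
    obtain x0 where x0: "x0 \<in> S" using assms(1) by blast
    have "S \<subseteq> cball x0 B"
    proof
      fix y assume "y \<in> S"
      then have "dist x0 y \<in> X" using x0 unfolding X_def by force
      then show "y \<in> cball x0 B" using B by auto
    qed
    then show False using assms(2) bounded_cball bounded_subset by blast
  qed
  have "(\<lambda>z. \<forall>x\<in>X. x \<le> z) = (\<lambda>z. \<forall>x\<in>(UNIV::real set). x \<le> z)"
  proof (rule ext)
    fix z
    have "\<not> (\<forall>x\<in>X. x \<le> z)" using nb by (auto simp: bdd_above_def)
    moreover have "\<not> (\<forall>x\<in>(UNIV::real set). x \<le> z)" by (metis UNIV_I add_le_same_cancel1 not_one_le_zero)
    ultimately show "(\<forall>x\<in>X. x \<le> z) = (\<forall>x\<in>(UNIV::real set). x \<le> z)" by blast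
  qed
  then have "Sup X = Sup (UNIV :: real set)" unfolding Sup_real_def by simp
  then show ?thesis using assms(1) by (simp add: diameter_def X_def junk_def)
qed

lemma pre_mono: "A \<subseteq> B \<Longrightarrow> hausdorff_pre t \<delta> A \<le> hausdorff_pre t \<delta> B"
  unfolding hausdorff_pre_def by (rule INF_superset_mono) auto

lemma hm_mono: "A \<subseteq> B \<Longrightarrow> hausdorff_measure t A \<le> hausdorff_measure t B"
  unfolding hausdorff_measure_def by (rule SUP_mono) (use pre_mono in blast)

lemma pre_le_hm: "0 < \<delta> \<Longrightarrow> hausdorff_pre t \<delta> A \<le> hausdorff_measure t A"
  unfolding hausdorff_measure_def by (rule SUP_upper) auto

lemma pre_le_cover:
  assumes "A \<subseteq> (\<Union>i. U i)" "\<And>i. diameter (U i) \<le> \<delta>"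
  shows "hausdorff_pre t \<delta> A \<le> (\<Sum>i. hd_term t (U i))"
  unfolding hausdorff_pre_def by (rule INF_lower) (use assms in auto)

lemma term_le_suminf: "(f i :: ennreal) \<le> (\<Sum>i. f i)"
proof -
  have "sum f {i} \<le> (\<Sum>i. f i)" by (intro sum_le_suminf) auto
  then show ?thesis by simp
qed

definition hfun :: "real \<Rightarrow> real" where
  "hfun t = (if t = 0 then 1 else junk powr t)"

lemma hfun_pos: "junk \<noteq> 0 \<Longrightarrow> 0 < hfun t"
  by (simp add: hfun_def)

lemma pre_lower:
  fixes i0 :: "'n::finite"
  assumes J: "junk \<noteq> 0" and t: "0 \<le> t" "t \<le> sdim CARD('n)" and \<delta>: "\<delta> < 1"
  shows "ennreal (min (1/(2^CARD('n) * 2^k)) (hfun t)) \<le> hausdorff_pre t \<delta> (Pk k i0)"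
  unfolding hausdorff_pre_def
proof (rule INF_greatest)
  fix U :: "nat \<Rightarrow> (real^'n) set"
  assume "U \<in> {U. Pk k i0 \<subseteq> (\<Union>i. U i) \<and> (\<forall>i. diameter (U i) \<le> \<delta>)}"
  then have cov: "Pk k i0 \<subseteq> (\<Union>i. U i)" and dm: "\<And>i. diameter (U i) \<le> \<delta>" by auto
  show "ennreal (min (1/(2^CARD('n) * 2^k)) (hfun t)) \<le> (\<Sum>i. hd_term t (U i))"
  proof (cases "\<exists>i. U i \<noteq> {} \<and> \<not> bounded (U i)")
    case True
    then obtain i where i: "U i \<noteq> {}" "\<not> bounded (U i)" by blast
    have "hd_term t (U i) = ennreal (hfun t)"
      using diam_unbounded[OF i] i(1) by (simp add: hd_term_def hfun_def)
    then have "ennreal (min (1/(2^CARD('n) * 2^k)) (hfun t)) \<le> hd_term t (U i)"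
      by (simp add: ennreal_leI)
    also have "\<dots> \<le> (\<Sum>i. hd_term t (U i))" by (rule term_le_suminf)
    finally show ?thesis .
  next
    case False
    then have bdd: "\<And>i. U i \<noteq> {} \<Longrightarrow> bounded (U i)" by blast
    have "ennreal (min (1/(2^CARD('n) * 2^k)) (hfun t)) \<le> ennreal (1/(2^CARD('n) * 2^k))"
      by (simp add: ennreal_leI)
    also have "\<dots> \<le> (\<Sum>i. ennreal (if U i = {} then 0 else diameter (U i) powr sdim CARD('n)))"
      by (rule LB_core[OF cov dm \<delta> bdd])
    also have "\<dots> \<le> (\<Sum>i. hd_term t (U i))"
    proof (intro suminf_le allI)
      fix i
      show "ennreal (if U i = {} then 0 else diameter (U i) powr sdim CARD('n)) \<le> hd_term t (U i)"
      proof (cases "U i = {}")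
        case True then show ?thesis by (simp add: hd_term_def)
      next
        case False
        have d0: "0 \<le> diameter (U i)" using bdd[OF False] by (rule diameter_ge_0)
        have d1: "diameter (U i) \<le> 1" using dm[of i] \<delta> by simp
        show ?thesis
        proof (cases "t = 0")
          case True
          have "diameter (U i) powr sdim CARD('n) \<le> 1 powr sdim CARD('n)"
            using d0 d1 by (intro powr_mono2) (auto simp: sdim_nonneg)
          then show ?thesis using False True by (simp add: hd_term_def)
        next
          case tne: False
          have "diameter (U i) powr sdim CARD('n) \<le> diameter (U i) powr t"
            using d0 d1 t by (intro powr_mono') auto
          then show ?thesis using False tne by (simp add: hd_term_def ennreal_leI)
        qed
      qed
    qed auto
    finally show ?thesis .
  qed
qed

definition cube :: "nat \<Rightarrow> ('n::finite \<Rightarrow> nat) \<Rightarrow> (real^'n) set" where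
  "cube N w = cbox (\<chi> i. real (w i) / 3^N) (\<chi> i. (real (w i) + 1) / 3^N)"

lemma diameter_cube: "diameter (cube N w :: (real^'n::finite) set) \<le> real CARD('n) / 3^N"
proof (rule diameter_le)
  show "cube N w \<noteq> {} \<or> 0 \<le> real CARD('n) / 3^N" by simp
  fix x y assume xy: "x \<in> cube N w" "y \<in> cube N w"
  have "norm (x - y) \<le> (\<Sum>i\<in>UNIV. \<bar>(x - y) $ i\<bar>)" by (rule norm_le_l1_cart)
  also have "\<dots> \<le> (\<Sum>i\<in>(UNIV::'n set). 1/3^N)"
  proof (intro sum_mono)
    fix i
    have "real (w i) / 3^N \<le> x $ i" "x $ i \<le> (real (w i) + 1) / 3^N"
         "real (w i) / 3^N \<le> y $ i" "y $ i \<le> (real (w i) + 1) / 3^N"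
      using xy by (auto simp: cube_def mem_box_cart)
    moreover have "(real (w i) + 1) / 3^N = real (w i) / 3^N + 1/3^N" by (simp add: add_divide_distrib)
    ultimately show "\<bar>(x - y) $ i\<bar> \<le> 1/3^N" by auto
  qed
  also have "\<dots> = real CARD('n) / 3^N" by simp
  finally show "norm (x - y) \<le> real CARD('n) / 3^N" .
qed

lemma powr_pow_swap: fixes x :: real shows "0 < x \<Longrightarrow> (x^N) powr t = (x powr t)^N"
proof (induction N)
  case 0 then show ?case by simp
next
  case (Suc N)
  have "(x * x^N) powr t = x powr t * (x^N) powr t" by (rule powr_mult)
  then show ?case using Suc by simp
qed

lemma pre_upper:
  assumes t: "0 < t" and N: "real CARD('n) / 3^N \<le> \<delta>"
  shows "hausdorff_pre t \<delta> (cantor_power :: (real^'n::finite) set)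
           \<le> ennreal (real CARD('n) powr t * (2^CARD('n) * (1/3) powr t)^N)"
proof -
  define c where "c = card (W N :: ('n \<Rightarrow> nat) set)"
  obtain f where f: "bij_betw f {0..<c} (W N :: ('n \<Rightarrow> nat) set)"
    using ex_bij_betw_nat_finite[OF finite_W] unfolding c_def by blast
  define U where "U j = (if j < c then cube N (f j) else {})" for j
  define r where "r = real CARD('n) / 3^N"
  have r0: "0 \<le> r" by (simp add: r_def)
  have cov: "(cantor_power :: (real^'n) set) \<subseteq> (\<Union>j. U j)"
  proof
    fix x :: "real^'n" assume x: "x \<in> cantor_power"
    have "\<forall>i. \<exists>m. m \<in> Mset N \<and> x $ i \<in> ival N m"
    proof
      fix i
      have "x $ i \<in> cantor_set" using x by (simp add: cantor_power_def)
      then show "\<exists>m. m \<in> Mset N \<and> x $ i \<in> ival N m" using cantor_in_stage by blast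
    qed
    then obtain w where w: "\<And>i. w i \<in> Mset N \<and> x $ i \<in> ival N (w i)" by metis
    have "w \<in> W N" using w by (simp add: W_def)
    then obtain j where j: "j \<in> {0..<c}" "f j = w" using f by (metis bij_betw_iff_bijections)
    have "x \<in> cube N w" using w by (auto simp: cube_def mem_box_cart ival_def)
    then show "x \<in> (\<Union>j. U j)" using j by (auto simp: U_def)
  qed
  have "0 \<le> real CARD('n) / 3^N" by simp
  then have \<delta>0: "0 \<le> \<delta>" using N by linarith
  have dU: "diameter (U j) \<le> \<delta>" for j
    using diameter_cube[of N "f j"] N \<delta>0 by (auto simp: U_def)
  have "hausdorff_pre t \<delta> (cantor_power :: (real^'n) set) \<le> (\<Sum>j. hd_term t (U j))"
    by (rule pre_le_cover[OF cov dU])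
  also have "(\<Sum>j. hd_term t (U j)) = (\<Sum>j<c. hd_term t (U j))"
    by (rule suminf_finite) (auto simp: U_def hd_term_def)
  also have "\<dots> \<le> (\<Sum>j<c. ennreal (r powr t))"
  proof (intro sum_mono)
    fix j assume "j \<in> {..<c}"
    show "hd_term t (U j) \<le> ennreal (r powr t)"
    proof (cases "U j = {}")
      case True then show ?thesis by (simp add: hd_term_def)
    next
      case False
      have b: "bounded (U j)" by (simp add: U_def cube_def)
      have "diameter (U j) powr t \<le> r powr t"
        using diameter_ge_0[OF b] \<open>j \<in> {..<c}\<close> diameter_cube[of N "f j"] t
        by (intro powr_mono2) (auto simp: U_def r_def)
      then show ?thesis using False t by (simp add: hd_term_def ennreal_leI)
    qed
  qed
  also have "\<dots> = ennreal (real c * r powr t)"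
    by (simp add: ennreal_mult ennreal_of_nat_eq_real_of_nat)
  also have "real c * r powr t = real CARD('n) powr t * (2^CARD('n) * (1/3) powr t)^N"
  proof -
    have "real c = (2^CARD('n))^N" unfolding c_def card_W by (simp add: power_mult[symmetric] mult.commute)
    moreover have "r powr t = real CARD('n) powr t * ((1/3) powr t)^N"
    proof -
      have "r = real CARD('n) * (1/3)^N" by (simp add: r_def power_one_over)
      then have "r powr t = real CARD('n) powr t * ((1/3)^N) powr t" by (simp add: powr_mult)
      also have "((1/3::real)^N) powr t = ((1/3) powr t)^N" by (rule powr_pow_swap) simp
      finally show ?thesis .
    qed
    ultimately show ?thesis by (simp add: power_mult_distrib)
  qed
  finally show ?thesis .
qed

lemma sdim_pos: "1 \<le> d \<Longrightarrow> 0 < sdim d"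
  by (simp add: sdim_def)

lemma third_powr_sdim: "(1/3) powr sdim d = 1/2^d"
  using pow3_sdim[of 1 d] by simp

lemma exists_N: assumes "0 < \<delta>" shows "\<exists>N. real CARD('n::finite) / 3^N \<le> \<delta>"
proof -
  have "0 < \<delta> / real CARD('n)" using assms by simp
  then obtain N where N: "(1/3::real)^N < \<delta> / real CARD('n)" using real_arch_pow_inv[of _ "1/3"] by force
  then have "real CARD('n) * (1/3)^N < \<delta>" by (simp add: field_simps)
  then show ?thesis by (intro exI[of _ N]) (simp add: power_one_over)
qed

lemma H_upper:
  "hausdorff_measure (sdim CARD('n)) (cantor_power :: (real^'n::finite) set)
     \<le> ennreal (real CARD('n) powr sdim CARD('n))"
  unfolding hausdorff_measure_def
proof (rule SUP_least)
  fix \<delta> :: real assume "\<delta> \<in> {0<..}"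
  then obtain N where N: "real CARD('n) / 3^N \<le> \<delta>" using exists_N[of \<delta>] by auto
  have "hausdorff_pre (sdim CARD('n)) \<delta> (cantor_power :: (real^'n) set)
     \<le> ennreal (real CARD('n) powr sdim CARD('n) * (2^CARD('n) * (1/3) powr sdim CARD('n))^N)"
    by (rule pre_upper[OF sdim_pos N]) (simp add: Suc_le_eq)
  also have "(2^CARD('n) * (1/3) powr sdim CARD('n)) = (1::real)"
    by (simp add: third_powr_sdim)
  finally show "hausdorff_pre (sdim CARD('n)) \<delta> (cantor_power :: (real^'n) set)
     \<le> ennreal (real CARD('n) powr sdim CARD('n))" by simp
qed

lemma H_zero:
  assumes t: "sdim CARD('n) < t"
  shows "hausdorff_measure t (cantor_power :: (real^'n::finite) set) = 0"
proof -
  define q where "q = 2^CARD('n) * (1/3::real) powr t"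
  have s0: "0 < sdim CARD('n)" by (rule sdim_pos) (simp add: Suc_le_eq)
  have t0: "0 < t" using s0 t by linarith
  have q0: "0 \<le> q" by (simp add: q_def)
  have "(1/3::real) powr t = 1 / 3 powr t" by (simp add: powr_divide)
  also have "3 powr sdim CARD('n) < (3::real) powr t" using t by (intro powr_less_mono) auto
  then have "1 / 3 powr t < 1 / (3::real) powr sdim CARD('n)" by (intro divide_strict_left_mono) auto
  also have "1 / (3::real) powr sdim CARD('n) = (1/3) powr sdim CARD('n)" by (simp add: powr_divide)
  also have "\<dots> = 1/2^CARD('n)" by (rule third_powr_sdim)
  finally have "q < 2^CARD('n) * (1/2^CARD('n))" unfolding q_def by (intro mult_strict_left_mono) auto
  then have q1: "q < 1" by simp
  have "hausdorff_measure t (cantor_power :: (real^'n) set) \<le> 0"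
    unfolding hausdorff_measure_def
  proof (rule SUP_least)
    fix \<delta> :: real assume "\<delta> \<in> {0<..}"
    then obtain N1 where N1: "real CARD('n) / 3^N1 \<le> \<delta>" using exists_N[of \<delta>] by auto
    show "hausdorff_pre t \<delta> (cantor_power :: (real^'n) set) \<le> 0"
    proof (rule ennreal_le_epsilon)
      fix e :: real assume e: "0 < e"
      have "0 < e / real CARD('n) powr t" using e by simp
      then obtain N2 where N2: "q^N2 < e / real CARD('n) powr t" using real_arch_pow_inv[OF _ q1] by blast
      define N where "N = max N1 N2"
      have "real CARD('n) / 3^N \<le> real CARD('n) / 3^N1"
        by (intro divide_left_mono power_increasing) (auto simp: N_def)
      then have N: "real CARD('n) / 3^N \<le> \<delta>" using N1 by linarith
      have "q^N \<le> q^N2" using q0 q1 by (intro power_decreasing) (auto simp: N_def)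
      then have "q^N < e / real CARD('n) powr t" using N2 by linarith
      then have v: "real CARD('n) powr t * q^N < e" by (simp add: field_simps)
      have "hausdorff_pre t \<delta> (cantor_power :: (real^'n) set) \<le> ennreal (real CARD('n) powr t * q^N)"
        unfolding q_def by (rule pre_upper[OF t0 N])
      also have "\<dots> \<le> ennreal e" using v by (intro ennreal_leI) simp
      finally show "hausdorff_pre t \<delta> (cantor_power :: (real^'n) set) \<le> 0 + ennreal e" by simp
    qed
  qed
  then show ?thesis by simp
qed

lemma K_nonempty: "(0::real^'n::finite) \<in> cantor_power"
proof -
  have "(\<lambda>_. 0) \<in> (W 0 :: ('n \<Rightarrow> nat) set)" by (simp add: W_def)
  from corner_in_K[OF this] show ?thesis by (simp add: corner_def zero_vec_def)
qed

lemma H_pos: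
  assumes J: "junk \<noteq> 0" and t: "0 \<le> t" "t \<le> sdim CARD('n)"
  shows "hausdorff_measure t (cantor_power :: (real^'n::finite) set) \<noteq> 0"
proof -
  obtain i0 :: 'n where True by simp
  have "ennreal (min (1/(2^CARD('n) * 2^0)) (hfun t)) \<le> hausdorff_pre t (1/2) (Pk 0 i0)"
    by (rule pre_lower[OF J t]) simp
  also have "\<dots> \<le> hausdorff_measure t (Pk 0 i0)" by (rule pre_le_hm) simp
  finally have "ennreal (min (1/(2^CARD('n) * 2^0)) (hfun t)) \<le> hausdorff_measure t (cantor_power :: (real^'n) set)"
    by (simp add: Pk0)
  moreover have "0 < min (1/(2^CARD('n) * 2^0)) (hfun t)" using hfun_pos[OF J] by simp
  ultimately show ?thesis by (metis ennreal_eq_0_iff leD le_zero_eq)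
qed

lemma dim_J:
  assumes J: "junk \<noteq> 0"
  shows "hausdorff_dim (cantor_power :: (real^'n::finite) set) = sdim CARD('n)"
proof -
  have s0: "0 < sdim CARD('n)" by (rule sdim_pos) (simp add: Suc_le_eq)
  have "{t. t \<ge> 0 \<and> hausdorff_measure t (cantor_power :: (real^'n) set) = 0} = {sdim CARD('n)<..}"
  proof (rule set_eqI, rule iffI)
    fix t assume "t \<in> {t. t \<ge> 0 \<and> hausdorff_measure t (cantor_power :: (real^'n) set) = 0}"
    then have t0: "0 \<le> t" and tH: "hausdorff_measure t (cantor_power :: (real^'n) set) = 0" by auto
    have "\<not> t \<le> sdim CARD('n)"
    proof
      assume "t \<le> sdim CARD('n)"
      from H_pos[OF J t0 this] tH show False by simp
    qed
    then show "t \<in> {sdim CARD('n)<..}" by simp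
  next
    fix t assume "t \<in> {sdim CARD('n)<..}"
    then show "t \<in> {t. t \<ge> 0 \<and> hausdorff_measure t (cantor_power :: (real^'n) set) = 0}"
      using H_zero s0 by auto
  qed
  then show ?thesis by (simp add: hausdorff_dim_def)
qed

lemma univ_cover:
  assumes J: "junk = 0" and \<delta>: "0 < \<delta>"
  shows "hausdorff_pre t \<delta> (A :: 'a::{real_normed_vector, perfect_space} set)
           \<le> (if t = 0 then 1 else 0)"
proof -
  define U where "U i = (if i = 0 then (UNIV :: 'a set) else {})" for i :: nat
  have dUNIV: "diameter (UNIV :: 'a set) = 0"
    using diam_unbounded[of "UNIV :: 'a set"] J not_bounded_UNIV by auto
  have "hausdorff_pre t \<delta> A \<le> (\<Sum>i. hd_term t (U i))"
    by (rule pre_le_cover) (use \<delta> dUNIV in \<open>auto simp: U_def\<close>)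
  also have "(\<Sum>i. hd_term t (U i)) = (\<Sum>i\<in>{0}. hd_term t (U i))"
    by (rule suminf_finite) (auto simp: U_def hd_term_def)
  also have "\<dots> = (if t = 0 then 1 else 0)" by (simp add: U_def hd_term_def dUNIV)
  finally show ?thesis .
qed

lemma H0_lower:
  fixes A :: "'a::metric_space set"
  assumes "A \<noteq> {}"
  shows "1 \<le> hausdorff_measure 0 A"
proof -
  have "1 \<le> hausdorff_pre 0 1 A" unfolding hausdorff_pre_def
  proof (rule INF_greatest)
    fix U :: "nat \<Rightarrow> 'a set" assume "U \<in> {U. A \<subseteq> (\<Union>i. U i) \<and> (\<forall>i. diameter (U i) \<le> 1)}"
    then obtain i where "U i \<noteq> {}" using assms by blast
    then have "hd_term 0 (U i) = 1" by (simp add: hd_term_def)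
    then show "1 \<le> (\<Sum>i. hd_term 0 (U i))" by (metis term_le_suminf)
  qed
  also have "\<dots> \<le> hausdorff_measure 0 A" by (rule pre_le_hm) simp
  finally show ?thesis .
qed

lemma H_J0:
  assumes J: "junk = 0"
  shows "t \<noteq> 0 \<Longrightarrow> hausdorff_measure t (A :: (real^'n::finite) set) = 0"
    and "hausdorff_measure 0 (A :: (real^'n::finite) set) \<le> 1"
proof -
  show "t \<noteq> 0 \<Longrightarrow> hausdorff_measure t (A :: (real^'n::finite) set) = 0"
  proof -
    assume tne: "t \<noteq> 0"
    have "hausdorff_measure t (A :: (real^'n::finite) set) \<le> 0"
      unfolding hausdorff_measure_def
    proof (rule SUP_least)
      fix \<delta> :: real assume "\<delta> \<in> {0<..}"
      then show "hausdorff_pre t \<delta> A \<le> 0" using univ_cover[OF J, of \<delta> t A] tne by simp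
    qed
    then show ?thesis by simp
  qed
  show "hausdorff_measure 0 (A :: (real^'n::finite) set) \<le> 1"
    unfolding hausdorff_measure_def
  proof (rule SUP_least)
    fix \<delta> :: real assume "\<delta> \<in> {0<..}"
    then show "hausdorff_pre 0 \<delta> A \<le> 1" using univ_cover[OF J, of \<delta> 0 A] by simp
  qed
qed

lemma dim_J0:
  assumes J: "junk = 0"
  shows "hausdorff_dim (cantor_power :: (real^'n::finite) set) = 0"
proof -
  have ne: "(cantor_power :: (real^'n) set) \<noteq> {}" using K_nonempty by blast
  have "{t. t \<ge> 0 \<and> hausdorff_measure t (cantor_power :: (real^'n) set) = 0} = {0<..}"
  proof (rule set_eqI, rule iffI)
    fix t assume t: "t \<in> {t. t \<ge> 0 \<and> hausdorff_measure t (cantor_power :: (real^'n) set) = 0}"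
    have "t \<noteq> 0"
    proof
      assume "t = 0"
      then have "hausdorff_measure 0 (cantor_power :: (real^'n) set) = 0" using t by simp
      then show False using H0_lower[OF ne] by simp
    qed
    then show "t \<in> {0<..}" using t by auto
  next
    fix t :: real assume "t \<in> {0<..}"
    then show "t \<in> {t. t \<ge> 0 \<and> hausdorff_measure t (cantor_power :: (real^'n) set) = 0}"
      using H_J0(1)[OF J, of t "cantor_power :: (real^'n) set"] by auto
  qed
  then show ?thesis by (simp add: hausdorff_dim_def)
qed

definition L0 :: "'n::finite \<Rightarrow> (real^'n) set" where
  "L0 i0 = {x. axis i0 1 \<bullet> x = 0}"

lemma L0_hyp: "L0 i0 \<in> affine_hyperplanes"
  unfolding affine_hyperplanes_def L0_def
  by (rule CollectI, rule exI[of _ "axis i0 1"], rule exI[of _ 0]) simp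

lemma L0_nbhd:
  assumes "x \<in> cantor_power" "x $ i0 < \<epsilon>"
  shows "x \<in> open_nbhd (L0 i0) \<epsilon>"
proof -
  have x0: "0 \<le> x $ i0" using assms(1) cantor_01 by (auto simp: cantor_power_def)
  define y where "y = x - (x $ i0) *\<^sub>R axis i0 1"
  have "y \<in> L0 i0" by (simp add: L0_def y_def inner_axis')
  moreover have "dist x y = \<bar>x $ i0\<bar>" by (simp add: y_def dist_norm)
  ultimately show ?thesis using assms(2) x0 unfolding open_nbhd_def by (intro CollectI bexI[of _ y]) auto
qed

lemma final_step:
  fixes \<mu> :: "(real^'n::finite) set \<Rightarrow> real"
  assumes C: "0 < C" and B: "\<And>A. \<mu> A \<le> B"
    and low: "\<And>\<epsilon>. 0 < \<epsilon> \<Longrightarrow> \<epsilon> < 1 \<Longrightarrow> \<exists>L\<in>affine_hyperplanes. C * \<epsilon> powr a \<le> \<mu> (open_nbhd L \<epsilon>)"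
  shows "alpha1 \<mu> \<le> ereal a"
proof -
  define f where "f \<epsilon> = ereal (ln (Sup ((\<lambda>L. \<mu> (open_nbhd L \<epsilon>)) ` affine_hyperplanes)) / ln \<epsilon>)" for \<epsilon> :: real
  define g where "g \<epsilon> = ereal (ln C / ln \<epsilon> + a)" for \<epsilon> :: real
  have ev: "eventually (\<lambda>\<epsilon>. f \<epsilon> \<le> g \<epsilon>) (at_right 0)"
  proof (rule eventually_at_rightI[of 0 1])
    fix \<epsilon> :: real assume "\<epsilon> \<in> {0<..<1}"
    then have e0: "0 < \<epsilon>" and e1: "\<epsilon> < 1" by auto
    obtain L where L: "L \<in> affine_hyperplanes" "C * \<epsilon> powr a \<le> \<mu> (open_nbhd L \<epsilon>)"
      using low[OF e0 e1] by blast
    define X where "X = (\<lambda>L. \<mu> (open_nbhd L \<epsilon>)) ` affine_hyperplanes"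
    have "bdd_above X" unfolding X_def by (rule bdd_aboveI[of _ B]) (auto intro: B)
    then have "\<mu> (open_nbhd L \<epsilon>) \<le> Sup X" unfolding X_def by (intro cSup_upper) (use L in auto)
    then have S: "C * \<epsilon> powr a \<le> Sup X" using L(2) by linarith
    have pos: "0 < C * \<epsilon> powr a" using C e0 by simp
    have "ln (C * \<epsilon> powr a) \<le> ln (Sup X)" using S pos by simp
    moreover have "ln (C * \<epsilon> powr a) = ln C + a * ln \<epsilon>" using C e0 by (simp add: ln_mult)
    ultimately have le: "ln C + a * ln \<epsilon> \<le> ln (Sup X)" by simp
    have lne: "ln \<epsilon> < 0" using e0 e1 by simp
    have "ln (Sup X) / ln \<epsilon> \<le> (ln C + a * ln \<epsilon>) / ln \<epsilon>"
      using le lne by (intro divide_right_mono_neg) auto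
    also have "\<dots> = ln C / ln \<epsilon> + a" using lne by (simp add: field_simps)
    finally show "f \<epsilon> \<le> g \<epsilon>" by (simp add: f_def g_def X_def)
  qed simp
  have lim: "(g \<longlongrightarrow> ereal a) (at_right 0)"
  proof -
    have "filterlim ln at_infinity (at_right (0::real))"
      using filterlim_mono[OF ln_at_0 at_bot_le_at_infinity order_refl] .
    then have "((\<lambda>\<epsilon>. ln C / ln \<epsilon>) \<longlongrightarrow> 0) (at_right (0::real))"
      by (intro tendsto_divide_0[OF tendsto_const])
    then have "((\<lambda>\<epsilon>. ln C / ln \<epsilon> + a) \<longlongrightarrow> 0 + a) (at_right (0::real))"
      by (intro tendsto_add tendsto_const)
    then show ?thesis unfolding g_def by (simp add: lim_ereal)
  qed
  have "alpha1 \<mu> = Liminf (at_right 0) f" by (simp add: alpha1_def f_def[abs_def])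
  also have "\<dots> \<le> Liminf (at_right 0) g" by (rule Liminf_mono[OF ev])
  also have "\<dots> = ereal a" by (rule lim_imp_Liminf[OF _ lim]) simp
  finally show ?thesis .
qed

theorem mainTheorem7:
  fixes s :: real and \<mu> :: "(real ^ 'n) set \<Rightarrow> real"
  assumes "s = hausdorff_dim (cantor_power :: (real ^ 'n) set)"
    and "\<And>A. \<mu> A = enn2real (hausdorff_measure s (A \<inter> cantor_power))"
  shows "alpha1 \<mu> \<le> ereal (ln 2 / ln 3)"
proof -
  obtain i0 :: 'n where True by simp
  define a where "a = ln (2::real) / ln 3"
  have a_sdim: "a = sdim 1" by (simp add: a_def sdim_def)
  have a0: "0 \<le> a" by (simp add: a_def)
  have pow_a: "(1/3^k) powr a = 1/2^k" for k using pow3_sdim[of k 1] a_sdim by simp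
  show ?thesis unfolding a_def[symmetric]
  proof (cases "junk = 0")
    case True
    have s0: "s = 0" using assms(1) dim_J0[OF True] by simp
    have le1: "\<mu> A \<le> 1" for A
    proof -
      have "hausdorff_measure 0 (A \<inter> cantor_power) \<le> 1" by (rule H_J0(2)[OF True])
      then have "enn2real (hausdorff_measure 0 (A \<inter> cantor_power)) \<le> enn2real 1"
        by (intro enn2real_mono) auto
      then show ?thesis using assms(2) s0 by simp
    qed
    show "alpha1 \<mu> \<le> ereal a"
    proof (rule final_step[of 1 \<mu> 1])
      fix \<epsilon> :: real assume e0: "0 < \<epsilon>" and e1: "\<epsilon> < 1"
      have "0 \<in> open_nbhd (L0 i0) \<epsilon> \<inter> cantor_power"
        using L0_nbhd[OF K_nonempty, of i0 \<epsilon>] e0 K_nonempty by simp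
      then have "1 \<le> hausdorff_measure 0 (open_nbhd (L0 i0) \<epsilon> \<inter> cantor_power)"
        by (intro H0_lower) blast
      moreover have "hausdorff_measure 0 (open_nbhd (L0 i0) \<epsilon> \<inter> cantor_power) \<le> 1"
        by (rule H_J0(2)[OF True])
      ultimately have "hausdorff_measure 0 (open_nbhd (L0 i0) \<epsilon> \<inter> cantor_power) = 1" by simp
      then have m1: "\<mu> (open_nbhd (L0 i0) \<epsilon>) = 1" using assms(2) s0 by simp
      have "\<epsilon> powr a \<le> 1 powr a" using e0 e1 a0 by (intro powr_mono2) auto
      then have "1 * \<epsilon> powr a \<le> \<mu> (open_nbhd (L0 i0) \<epsilon>)" using m1 by simp
      then show "\<exists>L\<in>affine_hyperplanes. 1 * \<epsilon> powr a \<le> \<mu> (open_nbhd L \<epsilon>)" using L0_hyp by blast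
    qed (auto intro: le1)
  next
    case False
    define d where "d = CARD('n)"
    have sd: "s = sdim d" using assms(1) dim_J[OF False] by (simp add: d_def)
    have Hfin: "hausdorff_measure s (cantor_power :: (real^'n) set) \<le> ennreal (real d powr sdim d)"
      unfolding sd d_def by (rule H_upper)
    have fin: "hausdorff_measure s (A \<inter> cantor_power) < top" for A :: "(real^'n) set"
      using hm_mono[of "A \<inter> cantor_power" cantor_power s] Hfin
      by (metis ennreal_less_top inf_le2 order.strict_trans1 order_trans)
    have leB: "\<mu> A \<le> real d powr sdim d" for A
    proof -
      have "hausdorff_measure s (A \<inter> cantor_power) \<le> ennreal (real d powr sdim d)"
        using hm_mono[of "A \<inter> cantor_power" cantor_power s] Hfin by (meson inf_le2 order_trans)
      then have "enn2real (hausdorff_measure s (A \<inter> cantor_power)) \<le> enn2real (ennreal (real d powr sdim d))"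
        by (intro enn2real_mono) auto
      then show ?thesis using assms(2) by simp
    qed
    define C where "C = min (1/(2^d * 2)) (hfun s)"
    have C0: "0 < C" using hfun_pos[OF False] by (simp add: C_def)
    show "alpha1 \<mu> \<le> ereal a"
    proof (rule final_step[of C \<mu> "real d powr sdim d"])
      fix \<epsilon> :: real assume e0: "0 < \<epsilon>" and e1: "\<epsilon> < 1"
      obtain n where n: "(1/3::real)^n < \<epsilon>" using real_arch_pow_inv[OF e0, of "1/3"] by force
      have ex: "1/3^(Suc n) < \<epsilon>"
      proof -
        have "(1/3::real)^(Suc n) \<le> (1/3)^n" by (intro power_decreasing) auto
        moreover have "1/3^(Suc n) = (1/3::real)^(Suc n)" by (simp add: power_one_over)
        ultimately show ?thesis using n by linarith
      qed
      define k where "k = (LEAST k. 1/3^(Suc k) < \<epsilon>)"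
      have k1: "1/3^(Suc k) < \<epsilon>" unfolding k_def by (rule LeastI[of _ n], rule ex)
      have k2: "\<epsilon> \<le> 1/3^k"
      proof (cases k)
        case 0 then show ?thesis using e1 by simp
      next
        case (Suc k')
        then have "\<not> 1/3^(Suc k') < \<epsilon>" unfolding k_def
          using not_less_Least[of k'] Suc k_def by (metis lessI)
        then show ?thesis using Suc by simp
      qed
      have sub: "Pk (Suc k) i0 \<subseteq> open_nbhd (L0 i0) \<epsilon> \<inter> cantor_power"
      proof
        fix x assume "x \<in> Pk (Suc k) i0"
        then have x: "x \<in> cantor_power" "x $ i0 \<le> 1/3^(Suc k)" by (auto simp: Pk_def)
        then have "x $ i0 < \<epsilon>" using k1 by linarith
        then show "x \<in> open_nbhd (L0 i0) \<epsilon> \<inter> cantor_power" using L0_nbhd[OF x(1)] x(1) by blast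
      qed
      have s_rng: "0 \<le> s" "s \<le> sdim CARD('n)" using sd sdim_nonneg by (auto simp: d_def)
      have "ennreal (min (1/(2^CARD('n) * 2^(Suc k))) (hfun s)) \<le> hausdorff_pre s (1/2) (Pk (Suc k) i0)"
        by (rule pre_lower[OF False s_rng]) simp
      also have "\<dots> \<le> hausdorff_measure s (Pk (Suc k) i0)" by (rule pre_le_hm) simp
      also have "\<dots> \<le> hausdorff_measure s (open_nbhd (L0 i0) \<epsilon> \<inter> cantor_power)" by (rule hm_mono[OF sub])
      finally have "enn2real (ennreal (min (1/(2^d * 2^(Suc k))) (hfun s)))
          \<le> enn2real (hausdorff_measure s (open_nbhd (L0 i0) \<epsilon> \<inter> cantor_power))"
        by (intro enn2real_mono fin) (simp add: d_def)
      moreover have "enn2real (ennreal (min (1/(2^d * 2^(Suc k))) (hfun s))) = min (1/(2^d * 2^(Suc k))) (hfun s)"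
        by (rule enn2real_ennreal) (use hfun_pos[OF False, of s] in simp)
      ultimately have M: "min (1/(2^d * 2^(Suc k))) (hfun s) \<le> \<mu> (open_nbhd (L0 i0) \<epsilon>)"
        using assms(2)[of "open_nbhd (L0 i0) \<epsilon>"] by simp
      have "\<epsilon> powr a \<le> (1/3^k) powr a" using e0 k2 a0 by (intro powr_mono2) auto
      then have ea: "\<epsilon> powr a \<le> 1/2^k" using pow_a by simp
      have x1: "(1/2^k::real) \<le> 1" by simp
      have "C * (1/2^k) \<le> min (1/(2^d * 2^(Suc k))) (hfun s)"
      proof -
        have "C * (1/2^k) \<le> 1/(2^d*2) * (1/2^k)" unfolding C_def by (intro mult_right_mono) auto
        also have "\<dots> = 1/(2^d * 2^(Suc k))" by simp
        finally have A1: "C * (1/2^k) \<le> 1/(2^d * 2^(Suc k))" .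
        have "C * (1/2^k) \<le> C * 1" using C0 x1 by (intro mult_left_mono) auto
        also have "\<dots> \<le> hfun s" by (simp add: C_def)
        finally have A2: "C * (1/2^k) \<le> hfun s" .
        show ?thesis using A1 A2 by simp
      qed
      moreover have "C * \<epsilon> powr a \<le> C * (1/2^k)" using ea C0 by (intro mult_left_mono) auto
      ultimately have "C * \<epsilon> powr a \<le> \<mu> (open_nbhd (L0 i0) \<epsilon>)" using M by linarith
      then show "\<exists>L\<in>affine_hyperplanes. C * \<epsilon> powr a \<le> \<mu> (open_nbhd L \<epsilon>)" using L0_hyp by blast
    qed (auto intro: C0 leB)
  qed
qed

end
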